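(* Let $\Delta\subseteq\mathbb{R}^d$ be a Delzant polytope. Then $\Upsilon(\Delta)$ equals the facet width of $\Delta$.
   Context: A Delzant polytope is a full-dimensional polytope $\Delta\subseteq\mathbb{R}^d$ whose normal fan consists of unimodular cones, i.e. at each vertex the primitive inner normals of the incident facets form a basis of $(\mathbb{Z}^d)^*$. Write the facets as $\{x\in\Delta:\langle u_k,x\rangle=-\phi_k\}$, $k=1,\dots,m$, with $u_k\in(\mathbb{Z}^d)^*$ primitive inner facet normals and $\phi_k\in\mathbb{R}$. $\Upsilon(\Delta)$ is the minimum of all positive values $\sum_k a_k\phi_k$ where $a_k$ are nonnegative integers with $\sum_k a_ku_k=0$. For $u\ne0$, $\mathrm{width}_u(\Delta)=\max_{x,y\in\Delta}|u(x)-u(y)|$; the facet width of $\Delta$ is $\min_k \mathrm{width}_{u_k}(\Delta)$ over the facet normals $u_k$. *)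

theory Defs
  imports "HOL-Analysis.Analysis"
begin

text \<open>Integral vectors in the lattice Z^d (dual lattice identified with Z^d via the inner product).\<close>
definition integral_vec :: "real^'d \<Rightarrow> bool" where
  "integral_vec u \<longleftrightarrow> (\<forall>i. u $ i \<in> \<int>)"

definition primitive_vec :: "real^'d \<Rightarrow> bool" where
  "primitive_vec u \<longleftrightarrow> integral_vec u \<and> u \<noteq> 0 \<and>
     (\<forall>n::nat. n > 1 \<longrightarrow> \<not> integral_vec ((1 / real n) *\<^sub>R u))"

definition facet_normal :: "(real^'d) set \<Rightarrow> (real^'d) set \<Rightarrow> real^'d \<Rightarrow> bool" where
  "facet_normal P F u \<longleftrightarrow> primitive_vec u \<and>
     (\<exists>c. (\<forall>x\<in>P. c \<le> u \<bullet> x) \<and> F = {x \<in> P. u \<bullet> x = c})"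

definition lattice_basis :: "(real^'d) set \<Rightarrow> bool" where
  "lattice_basis B \<longleftrightarrow> finite B \<and> card B = CARD('d) \<and> (\<forall>b\<in>B. integral_vec b) \<and>
     (\<forall>w. integral_vec w \<longrightarrow> (\<exists>a :: real^'d \<Rightarrow> int. w = (\<Sum>b\<in>B. of_int (a b) *\<^sub>R b)))"

definition delzant :: "(real^'d) set \<Rightarrow> bool" where
  "delzant P \<longleftrightarrow> polytope P \<and> aff_dim P = int CARD('d) \<and>
     (\<forall>F. F facet_of P \<longrightarrow> (\<exists>u. facet_normal P F u)) \<and>
     (\<forall>v. v extreme_point_of P \<longrightarrow>
        lattice_basis {u. \<exists>F. F facet_of P \<and> v \<in> F \<and> facet_normal P F u})"

definition fnormal :: "(real^'d) set \<Rightarrow> (real^'d) set \<Rightarrow> real^'d" where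
  "fnormal P F = (THE u. facet_normal P F u)"

definition fphi :: "(real^'d) set \<Rightarrow> (real^'d) set \<Rightarrow> real" where
  "fphi P F = - (THE c. F = {x \<in> P. fnormal P F \<bullet> x = c} \<and> (\<forall>x\<in>P. c \<le> fnormal P F \<bullet> x))"

definition Upsilon :: "(real^'d) set \<Rightarrow> real" where
  "Upsilon P = Inf {s. s > 0 \<and> (\<exists>a :: (real^'d) set \<Rightarrow> nat.
       (\<Sum>F\<in>{F. F facet_of P}. real (a F) *\<^sub>R fnormal P F) = 0 \<and>
       s = (\<Sum>F\<in>{F. F facet_of P}. real (a F) * fphi P F))}"

definition width_dir :: "real^'d \<Rightarrow> (real^'d) set \<Rightarrow> real" where
  "width_dir u P = Sup {\<bar>u \<bullet> x - u \<bullet> y\<bar> | x y. x \<in> P \<and> y \<in> P}"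

definition facet_width :: "(real^'d) set \<Rightarrow> real" where
  "facet_width P = Inf {width_dir (fnormal P F) P | F. F facet_of P}"

end

theory Submission
  imports Defs
begin

lemma hyp_mult:
  fixes C :: "(real^'d) set"
  assumes a0: "a \<noteq> 0" and a0': "a' \<noteq> 0" and s1: "C \<subseteq> {x. a \<bullet> x = b}" and s2: "C \<subseteq> {x. a' \<bullet> x = b'}"
    and dim: "aff_dim C = int CARD('d) - 1"
  shows "\<exists>l. l \<noteq> 0 \<and> a' = l *\<^sub>R a \<and> b' = l * b"
proof -
  have Cne: "C \<noteq> {}" using dim by auto
  have eq: "affine hull C = {x. c \<bullet> x = e}" if "c \<noteq> 0" "C \<subseteq> {x. c \<bullet> x = e}" for c e
  proof (rule affine_dim_equal)
    show "affine (affine hull C)" by simp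
    show "affine {x. c \<bullet> x = e}" by (rule affine_hyperplane)
    show "affine hull C \<noteq> {}" using Cne by simp
    show "affine hull C \<subseteq> {x. c \<bullet> x = e}" using that by (intro hull_minimal) (auto simp: affine_hyperplane)
    show "aff_dim (affine hull C) = aff_dim {x. c \<bullet> x = e}"
      using that dim by (simp add: aff_dim_hyperplane)
  qed
  have H: "{x. a \<bullet> x = b} = {x. a' \<bullet> x = b'}" using eq[OF a0 s1] eq[OF a0' s2] by simp
  define p where "p = (b / (a \<bullet> a)) *\<^sub>R a"
  have aa: "a \<bullet> a \<noteq> 0" using a0 by simp
  have pH: "a \<bullet> p = b" using aa by (simp add: p_def)
  hence pH': "a' \<bullet> p = b'" using H by blast
  have orth: "a' \<bullet> z = 0" if "a \<bullet> z = 0" for z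
  proof -
    have "a \<bullet> (p + z) = b" using pH that by (simp add: inner_add_right)
    hence "a' \<bullet> (p + z) = b'" using H by blast
    thus ?thesis using pH' by (simp add: inner_add_right)
  qed
  define mu where "mu = (a' \<bullet> a) / (a \<bullet> a)"
  define z where "z = a' - mu *\<^sub>R a"
  have az: "a \<bullet> z = 0" using aa by (simp add: z_def mu_def inner_diff_right inner_commute)
  have "z \<bullet> z = a' \<bullet> z - mu * (a \<bullet> z)" by (simp add: z_def inner_diff_left)
  also have "\<dots> = 0" using orth[OF az] az by simp
  finally have "z = 0" by simp
  hence a'eq: "a' = mu *\<^sub>R a" by (simp add: z_def)
  have "mu \<noteq> 0" using a0' a'eq by auto
  moreover have "b' = mu * b" using pH' pH a'eq by simp
  ultimately show ?thesis using a'eq by blast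
qed

lemma delzant_not_hyp:
  fixes P :: "(real^'d) set"
  assumes "delzant P" "a \<noteq> 0"
  shows "\<not> P \<subseteq> {x. a \<bullet> x = b}"
proof
  assume "P \<subseteq> {x. a \<bullet> x = b}"
  hence "aff_dim P \<le> aff_dim {x. a \<bullet> x = b}" by (rule aff_dim_subset)
  also have "\<dots> = int CARD('d) - 1" using assms(2) by (simp add: aff_dim_hyperplane)
  finally show False using assms(1) by (simp add: delzant_def)
qed

lemma primitive_scale:
  fixes u :: "real^'d"
  assumes pu: "primitive_vec u" and pu': "primitive_vec u'" and eq: "u' = l *\<^sub>R u" and l0: "l > 0"
  shows "l = 1"
proof -
  have iu: "integral_vec u" "u \<noteq> 0" and iu': "integral_vec u'"
    using pu pu' by (auto simp: primitive_vec_def)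
  have "\<exists>i. u $ i \<noteq> 0" using iu(2) by (simp add: vec_eq_iff)
  then obtain i where ui: "u $ i \<noteq> 0" by blast
  have "l = u' $ i / u $ i" using eq ui by simp
  moreover have "u' $ i \<in> \<rat>" "u $ i \<in> \<rat>" using iu(1) iu' Ints_subset_Rats
    unfolding integral_vec_def by blast+
  ultimately have "l \<in> \<rat>" by simp
  then obtain p q :: int where q0: "q > 0" and cop: "coprime p q" and lpq: "l = of_int p / of_int q"
    by (rule Rats_cases')
  have p0: "p > 0" using l0 lpq q0 by (simp add: zero_less_divide_iff) 
  define U where "U = (\<lambda>j. \<lfloor>u $ j\<rfloor>)"
  have U: "u $ j = of_int (U j)" for j
  proof -
    have "u $ j \<in> \<int>" using iu(1) unfolding integral_vec_def by blast
    then obtain n where "u $ j = of_int n" by (rule Ints_cases)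
    thus ?thesis unfolding U_def by simp
  qed 
  define U' where "U' = (\<lambda>j. \<lfloor>u' $ j\<rfloor>)"
  have U': "u' $ j = of_int (U' j)" for j
  proof -
    have "u' $ j \<in> \<int>" using iu'(1) unfolding integral_vec_def by blast
    then obtain n where "u' $ j = of_int n" by (rule Ints_cases)
    thus ?thesis unfolding U'_def by simp
  qed
  have rel: "q * U' j = p * U j" for j
  proof -
    have "u' $ j = l * u $ j" using eq by simp
    hence "real_of_int (U' j) = of_int p / of_int q * of_int (U j)" using lpq U U' by simp
    hence "real_of_int q * of_int (U' j) = of_int p * of_int (U j)" using q0 by (simp add: field_simps)
    hence "real_of_int (q * U' j) = of_int (p * U j)" by simp
    thus ?thesis by (simp only: of_int_eq_iff)
  qed
  have q1: "q = 1"
  proof (rule ccontr)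
    assume "q \<noteq> 1"
    hence q2: "nat q > 1" using q0 by simp
    have "q dvd U j" for j
    proof -
      have "p * U j = q * U' j" using rel[of j] by simp
      hence "q dvd p * U j" by simp
      moreover have "coprime q p" using cop by (simp add: coprime_commute)
      ultimately show ?thesis by (simp add: coprime_dvd_mult_right_iff)
    qed
    have "((1 / real (nat q)) *\<^sub>R u) $ j \<in> \<int>" for j
    proof -
      obtain k where k: "U j = q * k" using \<open>q dvd U j\<close> by (rule dvdE)
      have "((1 / real (nat q)) *\<^sub>R u) $ j = of_int (q * k) / of_int q" using q0 by (simp add: U k)
      also have "\<dots> = of_int k" using q0 by simp
      finally show ?thesis by simp
    qed
    hence "integral_vec ((1 / real (nat q)) *\<^sub>R u)" unfolding integral_vec_def by blast
    moreover have "\<not> integral_vec ((1 / real (nat q)) *\<^sub>R u)" using pu q2 unfolding primitive_vec_def by blast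
    ultimately show False by blast
  qed
  have p1: "p = 1"
  proof (rule ccontr)
    assume "p \<noteq> 1"
    hence p2: "nat p > 1" using p0 by simp
    have "p dvd U' j" for j
    proof -
      have "q * U' j = p * U j" using rel[of j] by simp
      hence "p dvd q * U' j" by simp
      thus ?thesis using cop by (simp add: coprime_dvd_mult_right_iff)
    qed
    have "((1 / real (nat p)) *\<^sub>R u') $ j \<in> \<int>" for j
    proof -
      obtain k where k: "U' j = p * k" using \<open>p dvd U' j\<close> by (rule dvdE)
      have "((1 / real (nat p)) *\<^sub>R u') $ j = of_int (p * k) / of_int p" using p0 by (simp add: U' k)
      also have "\<dots> = of_int k" using p0 by simp
      finally show ?thesis by simp
    qed
    hence "integral_vec ((1 / real (nat p)) *\<^sub>R u')" unfolding integral_vec_def by blast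
    moreover have "\<not> integral_vec ((1 / real (nat p)) *\<^sub>R u')" using pu' p2 unfolding primitive_vec_def by blast
    ultimately show False by blast
  qed
  show ?thesis using lpq q1 p1 by simp
qed


lemma facet_normal_unique:
  fixes P :: "(real^'d) set"
  assumes D: "delzant P" and F: "F facet_of P" and n1: "facet_normal P F u" and n2: "facet_normal P F u'"
  shows "u' = u"
proof -
  obtain c where c: "\<forall>x\<in>P. c \<le> u \<bullet> x" "F = {x \<in> P. u \<bullet> x = c}" and pu: "primitive_vec u"
    using n1 unfolding facet_normal_def by blast
  obtain c' where c': "\<forall>x\<in>P. c' \<le> u' \<bullet> x" "F = {x \<in> P. u' \<bullet> x = c'}" and pu': "primitive_vec u'"
    using n2 unfolding facet_normal_def by blast
  have u0: "u \<noteq> 0" "u' \<noteq> 0" using pu pu' by (auto simp: primitive_vec_def)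
  have dF: "aff_dim F = int CARD('d) - 1" using F D by (simp add: facet_of_def delzant_def)
  obtain l where l: "l \<noteq> 0" "u' = l *\<^sub>R u" "c' = l * c"
    using hyp_mult[OF u0(1) u0(2) _ _ dF, of c c'] c(2) c'(2) by blast
  have "l > 0"
  proof (rule ccontr)
    assume "\<not> l > 0"
    hence ln: "l < 0" using l(1) by simp
    have "P \<subseteq> {x. u \<bullet> x = c}"
    proof
      fix x assume x: "x \<in> P"
      have "l * c \<le> l * (u \<bullet> x)" using c'(1) x l by simp
      hence "u \<bullet> x \<le> c" using ln by (simp add: mult_le_cancel_left)
      thus "x \<in> {x. u \<bullet> x = c}" using c(1) x by force
    qed
    thus False using delzant_not_hyp[OF D u0(1)] by blast
  qed
  hence "l = 1" using primitive_scale[OF pu pu' l(2)] by simp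
  thus ?thesis using l by simp
qed

lemma fnormal_facet:
  fixes P :: "(real^'d) set"
  assumes D: "delzant P" and F: "F facet_of P"
  shows "facet_normal P F (fnormal P F)"
proof -
  obtain u where u: "facet_normal P F u" using D F unfolding delzant_def by blast
  show ?thesis unfolding fnormal_def
  proof (rule theI[of _ u])
    show "facet_normal P F u" by (rule u)
    fix u' assume "facet_normal P F u'"
    thus "u' = u" by (rule facet_normal_unique[OF D F u])
  qed
qed

lemma fphi_facet:
  fixes P :: "(real^'d) set"
  assumes D: "delzant P" and F: "F facet_of P"
  shows "F = {x \<in> P. fnormal P F \<bullet> x = - fphi P F}" "\<forall>x\<in>P. - fphi P F \<le> fnormal P F \<bullet> x"
proof -
  let ?u = "fnormal P F"
  obtain c where c: "\<forall>x\<in>P. c \<le> ?u \<bullet> x" "F = {x \<in> P. ?u \<bullet> x = c}"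
    using fnormal_facet[OF D F] unfolding facet_normal_def by blast
  have Fne: "F \<noteq> {}" using F by (simp add: facet_of_def)
  have uq: "c' = c" if "F = {x \<in> P. ?u \<bullet> x = c'} \<and> (\<forall>x\<in>P. c' \<le> ?u \<bullet> x)" for c'
  proof -
    obtain x where x: "x \<in> F" using Fne by blast
    have "?u \<bullet> x = c'" using that x by blast
    moreover have "?u \<bullet> x = c" using c(2) x by blast
    ultimately show ?thesis by simp
  qed
  have "(THE c. F = {x \<in> P. ?u \<bullet> x = c} \<and> (\<forall>x\<in>P. c \<le> ?u \<bullet> x)) = c"
  proof (rule the_equality)
    show "F = {x \<in> P. ?u \<bullet> x = c} \<and> (\<forall>x\<in>P. c \<le> ?u \<bullet> x)" using c by blast
    fix c' assume "F = {x \<in> P. ?u \<bullet> x = c'} \<and> (\<forall>x\<in>P. c' \<le> ?u \<bullet> x)"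
    thus "c' = c" by (rule uq)
  qed
  hence e: "- fphi P F = c" unfolding fphi_def by simp
  show "F = {x \<in> P. fnormal P F \<bullet> x = - fphi P F}" unfolding e by (rule c(2))
  show "\<forall>x\<in>P. - fphi P F \<le> fnormal P F \<bullet> x" unfolding e by (rule c(1))
qed

lemma fnormal_inj:
  fixes P :: "(real^'d) set"
  assumes D: "delzant P" and F: "F facet_of P" and G: "G facet_of P" and eq: "fnormal P F = fnormal P G"
  shows "F = G"
proof -
  have FG: "F = {x \<in> P. fnormal P F \<bullet> x = - fphi P F}" "\<forall>x\<in>P. - fphi P F \<le> fnormal P F \<bullet> x"
           "G = {x \<in> P. fnormal P G \<bullet> x = - fphi P G}" "\<forall>x\<in>P. - fphi P G \<le> fnormal P G \<bullet> x"
    using fphi_facet[OF D F] fphi_facet[OF D G] by auto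
  obtain x where x: "x \<in> F" using F by (auto simp: facet_of_def)
  obtain y where y: "y \<in> G" using G by (auto simp: facet_of_def)
  have xP: "x \<in> P" "fnormal P F \<bullet> x = - fphi P F" using x FG(1) by blast+
  have yP: "y \<in> P" "fnormal P G \<bullet> y = - fphi P G" using y FG(3) by blast+
  have "- fphi P G \<le> - fphi P F" using FG(4) xP eq by metis
  moreover have "- fphi P F \<le> - fphi P G" using FG(2) yP eq by metis
  ultimately have "fphi P F = fphi P G" by simp
  thus ?thesis using FG eq by simp
qed


lemma delzant_HR:
  fixes P :: "(real^'d) set"
  assumes D: "delzant P" and hx: "\<And>F. F facet_of P \<Longrightarrow> - fphi P F \<le> fnormal P F \<bullet> x"
  shows "x \<in> P"
proof -
  have poly: "polyhedron P" using D by (simp add: delzant_def polytope_imp_polyhedron)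
  obtain FF where fin: "finite FF" and seq: "P = affine hull P \<inter> \<Inter>FF"
             and faces: "\<And>h. h \<in> FF \<Longrightarrow> \<exists>a b. a \<noteq> 0 \<and> h = {x. a \<bullet> x \<le> b}"
             and min: "\<And>F'. F' \<subset> FF \<Longrightarrow> P \<subset> (affine hull P) \<inter> \<Inter>F'"
    using poly by (simp add: polyhedron_Int_affine_minimal) meson
  then obtain a b where ab: "\<And>h. h \<in> FF \<Longrightarrow> a h \<noteq> 0 \<and> h = {x. a h \<bullet> x \<le> b h}"
    by metis
  have aff: "affine hull P = UNIV"
    using D by (simp add: delzant_def aff_dim_eq_full[symmetric] DIM_cart)
  have "x \<in> h" if h: "h \<in> FF" for h
  proof -
    define C where "C = P \<inter> {x. a h \<bullet> x = b h}"
    have Cf: "C facet_of P" unfolding C_def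
      using facet_of_polyhedron_explicit[OF fin seq ab min] h by blast
    define u where "u = fnormal P C"
    define c where "c = - fphi P C"
    have Ceq: "C = {y \<in> P. u \<bullet> y = c}" and cle: "\<forall>y\<in>P. c \<le> u \<bullet> y"
      using fphi_facet[OF D Cf] unfolding u_def c_def by auto
    have u0: "u \<noteq> 0" using fnormal_facet[OF D Cf] unfolding u_def facet_normal_def primitive_vec_def by blast
    have a0: "a h \<noteq> 0" using ab h by blast
    have dC: "aff_dim C = int CARD('d) - 1" using Cf D by (simp add: facet_of_def delzant_def)
    have s1: "C \<subseteq> {y. u \<bullet> y = c}" using Ceq by blast
    have s2: "C \<subseteq> {y. a h \<bullet> y = b h}" unfolding C_def by blast
    obtain l where l: "l \<noteq> 0" "a h = l *\<^sub>R u" "b h = l * c"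
      using hyp_mult[OF u0 a0 s1 s2 dC] by blast
    have Ph: "P \<subseteq> {y. a h \<bullet> y \<le> b h}" using seq h ab by blast
    have "l < 0"
    proof (rule ccontr)
      assume "\<not> l < 0"
      hence lp: "l > 0" using l(1) by simp
      have "P \<subseteq> {y. u \<bullet> y = c}"
      proof
        fix y assume y: "y \<in> P"
        have "l * (u \<bullet> y) \<le> l * c" using Ph y l by auto
        hence "u \<bullet> y \<le> c" using lp by simp
        thus "y \<in> {y. u \<bullet> y = c}" using cle y by force
      qed
      thus False using delzant_not_hyp[OF D u0] by blast
    qed
    have "c \<le> u \<bullet> x" using hx[OF Cf] unfolding u_def c_def .
    hence "l * (u \<bullet> x) \<le> l * c" using \<open>l < 0\<close> by (simp add: mult_le_cancel_left)
    hence "a h \<bullet> x \<le> b h" using l by simp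
    thus ?thesis using ab h by blast
  qed
  thus ?thesis using aff by (subst seq) blast
qed


lemma delzant_facets:
  fixes P :: "(real^'d) set"
  assumes D: "delzant P"
  shows "finite {F. F facet_of P}" "{F. F facet_of P} \<noteq> {}"
proof -
  show "finite {F. F facet_of P}" using D by (simp add: delzant_def finite_polytope_facets)
  have "0 < aff_dim P" using D by (simp add: delzant_def)
  then obtain F where "F facet_of P" using polytope_facet_exists D by (metis delzant_def)
  thus "{F. F facet_of P} \<noteq> {}" by blast
qed

lemma delzant_max:
  fixes P :: "(real^'d) set"
  assumes D: "delzant P"
  obtains xm where "xm \<in> P" "\<And>y. y \<in> P \<Longrightarrow> u \<bullet> y \<le> u \<bullet> xm"
proof -
  have "compact P" using D by (simp add: delzant_def polytope_imp_compact)
  moreover have "P \<noteq> {}" using D by (auto simp: delzant_def)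
  moreover have "continuous_on P (\<lambda>y. u \<bullet> y)" by (intro continuous_intros)
  ultimately obtain xm where "xm \<in> P" "\<forall>y\<in>P. u \<bullet> y \<le> u \<bullet> xm"
    using continuous_attains_sup by blast
  thus ?thesis using that by blast
qed

lemma width_eq:
  fixes P :: "(real^'d) set"
  assumes D: "delzant P" and F: "F facet_of P" and xm: "xm \<in> P"
    and mx: "\<And>y. y \<in> P \<Longrightarrow> fnormal P F \<bullet> y \<le> fnormal P F \<bullet> xm"
  shows "width_dir (fnormal P F) P = fnormal P F \<bullet> xm + fphi P F"
proof -
  let ?u = "fnormal P F"
  have Feq: "F = {x \<in> P. ?u \<bullet> x = - fphi P F}" and lo: "\<forall>x\<in>P. - fphi P F \<le> ?u \<bullet> x"
    using fphi_facet[OF D F] by auto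
  obtain y0 where y0: "y0 \<in> F" using F by (auto simp: facet_of_def)
  have y0P: "y0 \<in> P" "?u \<bullet> y0 = - fphi P F" using y0 Feq by blast+
  show ?thesis unfolding width_dir_def
  proof (rule cSup_eq_maximum)
    have "\<bar>?u \<bullet> xm - ?u \<bullet> y0\<bar> = ?u \<bullet> xm + fphi P F" using y0P lo xm by auto
    hence "\<exists>x y. ?u \<bullet> xm + fphi P F = \<bar>?u \<bullet> x - ?u \<bullet> y\<bar> \<and> x \<in> P \<and> y \<in> P"
      using xm y0P by metis
    thus "?u \<bullet> xm + fphi P F \<in> {\<bar>?u \<bullet> x - ?u \<bullet> y\<bar> |x y. x \<in> P \<and> y \<in> P}"
      by simp
  next
    fix t assume "t \<in> {\<bar>?u \<bullet> x - ?u \<bullet> y\<bar> |x y. x \<in> P \<and> y \<in> P}"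
    then obtain x y where t: "t = \<bar>?u \<bullet> x - ?u \<bullet> y\<bar>" "x \<in> P" "y \<in> P" by blast
    have "- fphi P F \<le> ?u \<bullet> x" "?u \<bullet> x \<le> ?u \<bullet> xm" "- fphi P F \<le> ?u \<bullet> y" "?u \<bullet> y \<le> ?u \<bullet> xm"
      using lo mx t by auto
    thus "t \<le> ?u \<bullet> xm + fphi P F" using t(1) by linarith
  qed
qed


lemma upsilon_lower:
  fixes P :: "(real^'d) set" and a :: "(real^'d) set \<Rightarrow> nat"
  assumes D: "delzant P"
    and sum0: "(\<Sum>F\<in>{F. F facet_of P}. real (a F) *\<^sub>R fnormal P F) = 0"
    and sdef: "s = (\<Sum>F\<in>{F. F facet_of P}. real (a F) * fphi P F)" and s0: "s > 0"
  shows "\<exists>F. F facet_of P \<and> width_dir (fnormal P F) P \<le> s"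
proof -
  let ?FS = "{F. F facet_of P}"
  have fin: "finite ?FS" using delzant_facets[OF D] by blast
  have "\<exists>F\<in>?FS. a F > 0"
  proof (rule ccontr)
    assume "\<not> (\<exists>F\<in>?FS. a F > 0)"
    hence "\<forall>F\<in>?FS. a F = 0" by (simp add: not_less)
    hence "s = 0" unfolding sdef by simp
    thus False using s0 by simp
  qed
  then obtain F1 where F1: "F1 facet_of P" "a F1 > 0" by blast
  obtain xm where xm: "xm \<in> P" "\<And>y. y \<in> P \<Longrightarrow> fnormal P F1 \<bullet> y \<le> fnormal P F1 \<bullet> xm"
    using delzant_max[OF D] by blast
  have W: "width_dir (fnormal P F1) P = fnormal P F1 \<bullet> xm + fphi P F1"
    by (rule width_eq[OF D F1(1) xm])
  have nn: "0 \<le> fnormal P F \<bullet> xm + fphi P F" if "F facet_of P" for F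
    using fphi_facet(2)[OF D that] xm(1) by force
  have "(\<Sum>F\<in>?FS. real (a F) * (fnormal P F \<bullet> xm + fphi P F))
        = (\<Sum>F\<in>?FS. real (a F) * (fnormal P F \<bullet> xm)) + s"
    unfolding sdef by (simp add: distrib_left sum.distrib)
  also have "(\<Sum>F\<in>?FS. real (a F) * (fnormal P F \<bullet> xm)) = (\<Sum>F\<in>?FS. real (a F) *\<^sub>R fnormal P F) \<bullet> xm"
    by (simp add: inner_sum_left)
  also have "\<dots> = 0" using sum0 by simp
  finally have eqs: "(\<Sum>F\<in>?FS. real (a F) * (fnormal P F \<bullet> xm + fphi P F)) = s" by simp
  have "real (a F1) * (fnormal P F1 \<bullet> xm + fphi P F1) \<le> (\<Sum>F\<in>?FS. real (a F) * (fnormal P F \<bullet> xm + fphi P F))"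
  proof (rule member_le_sum)
    show "F1 \<in> ?FS" using F1 by simp
    show "finite ?FS" by (rule fin)
    fix F assume "F \<in> ?FS - {F1}"
    hence "F facet_of P" by simp
    thus "0 \<le> real (a F) * (fnormal P F \<bullet> xm + fphi P F)" using nn by simp
  qed
  moreover have "fnormal P F1 \<bullet> xm + fphi P F1 \<le> real (a F1) * (fnormal P F1 \<bullet> xm + fphi P F1)"
  proof -
    have "1 \<le> real (a F1)" using F1 by simp
    hence "0 \<le> (real (a F1) - 1) * (fnormal P F1 \<bullet> xm + fphi P F1)" using nn[OF F1(1)] by simp
    thus ?thesis by (simp add: algebra_simps)
  qed
  ultimately show ?thesis using eqs W F1 by auto
qed


lemma vertex_max:
  fixes P :: "(real^'d) set"
  assumes D: "delzant P"
  obtains v where "v extreme_point_of P" "\<And>y. y \<in> P \<Longrightarrow> u \<bullet> y \<le> u \<bullet> v"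
proof -
  obtain xm where xm: "xm \<in> P" "\<And>y. y \<in> P \<Longrightarrow> u \<bullet> y \<le> u \<bullet> xm"
    using delzant_max[OF D] by blast
  have cP: "convex P" "compact P" using D by (auto simp: delzant_def polytope_imp_convex polytope_imp_compact)
  define G where "G = P \<inter> {x. u \<bullet> x = u \<bullet> xm}"
  have Gf: "G face_of P" unfolding G_def
    by (rule face_of_Int_supporting_hyperplane_le) (use cP xm in auto)
  have "compact G" using face_of_imp_compact[OF cP Gf] .
  moreover have "convex G" using face_of_imp_convex[OF Gf] .
  moreover have "G \<noteq> {}" using xm unfolding G_def by blast
  ultimately obtain v where v: "v extreme_point_of G" using extreme_point_exists_convex by blast
  hence "{v} face_of G" by (simp add: face_of_singleton)
  hence "{v} face_of P" using Gf face_of_trans by blast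
  hence vP: "v extreme_point_of P" by (simp add: face_of_singleton)
  have "v \<in> G" using v by (simp add: extreme_point_of_def)
  hence "u \<bullet> v = u \<bullet> xm" unfolding G_def by blast
  thus ?thesis using that vP xm by simp
qed

lemma lattice_span:
  fixes B :: "(real^'d) set"
  assumes L: "lattice_basis B"
  shows "span B = UNIV"
proof -
  have "e \<in> span B" if e: "e \<in> Basis" for e :: "real^'d"
  proof -
    obtain i where ei: "e = axis i 1" using axis_inverse[OF e] by blast
    have "integral_vec e" unfolding integral_vec_def ei axis_def by simp
    then obtain c :: "real^'d \<Rightarrow> int" where "e = (\<Sum>b\<in>B. of_int (c b) *\<^sub>R b)"
      using L unfolding lattice_basis_def by blast
    thus ?thesis by (simp add: span_sum span_scale span_base)
  qed
  hence "Basis \<subseteq> span B" by blast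
  hence "span Basis \<subseteq> span B" by (metis span_mono span_span)
  thus ?thesis by (auto simp: span_Basis)
qed

lemma lattice_dual:
  fixes B :: "(real^'d) set"
  assumes L: "lattice_basis B" and w0: "w0 \<in> B"
  obtains z where "w0 \<bullet> z > 0" "\<And>w. w \<in> B - {w0} \<Longrightarrow> w \<bullet> z = 0"
proof -
  have fin: "finite B" using L[unfolded lattice_basis_def, THEN conjunct1] .
  have cB: "card B = CARD('d)" using L[unfolded lattice_basis_def, THEN conjunct2, THEN conjunct1] .
  have nsp: "w0 \<notin> span (B - {w0})"
  proof
    assume "w0 \<in> span (B - {w0})"
    hence "B \<subseteq> span (B - {w0})"
    proof -
      assume h: "w0 \<in> span (B - {w0})"
      show ?thesis
      proof
        fix b assume b: "b \<in> B"
        show "b \<in> span (B - {w0})"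
        proof (cases "b = w0")
          case True thus ?thesis using h by simp
        next
          case False thus ?thesis using b by (intro span_base) simp
        qed
      qed
    qed
    hence "span B \<subseteq> span (B - {w0})" by (metis span_mono span_span)
    hence "span (B - {w0}) = UNIV" using lattice_span[OF L] by blast
    hence "dim (UNIV :: (real^'d) set) = dim (span (B - {w0}))" by simp
    also have "\<dots> = dim (B - {w0})" by (rule dim_span)
    also have "\<dots> \<le> card (B - {w0})" using fin by (simp add: dim_le_card')
    also have "\<dots> = CARD('d) - 1" using cB w0 fin by (simp add: card_Diff_singleton)
    finally have "dim (UNIV :: (real^'d) set) \<le> CARD('d) - 1" .
    moreover have "dim (UNIV :: (real^'d) set) = CARD('d)" by (simp add: dim_UNIV DIM_cart)
    moreover have "CARD('d) > 0" by simp
    ultimately show False by linarith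
  qed
  obtain y z where yz: "y \<in> span (B - {w0})" "\<And>w. w \<in> span (B - {w0}) \<Longrightarrow> orthogonal z w" "w0 = y + z"
    by (rule orthogonal_subspace_decomp_exists[of "B - {w0}" w0]) blast
  have z0: "z \<noteq> 0"
  proof
    assume "z = 0"
    hence "w0 = y" using yz(3) by simp
    thus False using nsp yz(1) by simp
  qed
  have "w0 \<bullet> z = y \<bullet> z + z \<bullet> z" using yz(3) by (simp add: inner_add_left)
  also have "y \<bullet> z = 0" using yz(2)[OF yz(1)] by (simp add: orthogonal_def inner_commute)
  finally have "w0 \<bullet> z > 0" using z0 by simp
  moreover have "w \<bullet> z = 0" if "w \<in> B - {w0}" for w
    using yz(2)[OF span_base[OF that]] by (simp add: orthogonal_def inner_commute)
  ultimately show ?thesis using that by blast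
qed


lemma coeff_nonneg:
  fixes P :: "(real^'d) set" and b :: "real^'d \<Rightarrow> int"
  assumes D: "delzant P" and v: "v extreme_point_of P" and F0: "F0 facet_of P"
    and mx: "\<And>y. y \<in> P \<Longrightarrow> fnormal P F0 \<bullet> y \<le> fnormal P F0 \<bullet> v"
    and Bdef: "B = {w. \<exists>G. G facet_of P \<and> v \<in> G \<and> facet_normal P G w}"
    and eq: "- fnormal P F0 = (\<Sum>w\<in>B. of_int (b w) *\<^sub>R w)" and w0: "w0 \<in> B"
  shows "b w0 \<ge> 0"
proof (rule ccontr)
  assume "\<not> b w0 \<ge> 0"
  hence bneg: "b w0 < 0" by simp
  let ?u0 = "fnormal P F0"
  have L: "lattice_basis B" using D v unfolding delzant_def Bdef by blast
  have finB: "finite B" using L[unfolded lattice_basis_def, THEN conjunct1] .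
  obtain z where z: "w0 \<bullet> z > 0" "\<And>w. w \<in> B - {w0} \<Longrightarrow> w \<bullet> z = 0"
    using lattice_dual[OF L w0] by blast
  have "(- ?u0) \<bullet> z = (\<Sum>w\<in>B. of_int (b w) * (w \<bullet> z))"
    unfolding eq by (simp add: inner_sum_left)
  also have "\<dots> = of_int (b w0) * (w0 \<bullet> z) + (\<Sum>w\<in>B - {w0}. of_int (b w) * (w \<bullet> z))"
    using finB w0 by (simp add: sum.remove)
  also have "(\<Sum>w\<in>B - {w0}. of_int (b w) * (w \<bullet> z)) = 0"
    using z(2) by (intro sum.neutral) simp
  finally have "(- ?u0) \<bullet> z = of_int (b w0) * (w0 \<bullet> z)" by simp
  moreover have "of_int (b w0) * (w0 \<bullet> z) < (0::real)" using bneg z(1) by (simp add: mult_neg_pos)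
  ultimately have u0z: "?u0 \<bullet> z > 0" by simp
  have vP: "v \<in> P" using v by (simp add: extreme_point_of_def)
  define NF where "NF = {G. G facet_of P \<and> v \<notin> G}"
  have finNF: "finite NF" using delzant_facets(1)[OF D] unfolding NF_def by (rule rev_finite_subset) blast
  define gap where "gap G = fnormal P G \<bullet> v + fphi P G" for G
  have gap_pos: "gap G > 0" if "G \<in> NF" for G
  proof -
    have G: "G facet_of P" "v \<notin> G" using that unfolding NF_def by auto
    have "- fphi P G \<le> fnormal P G \<bullet> v" using fphi_facet(2)[OF D G(1)] vP by blast
    moreover have "fnormal P G \<bullet> v \<noteq> - fphi P G"
    proof
      assume "fnormal P G \<bullet> v = - fphi P G"
      hence "v \<in> G" using vP fphi_facet(1)[OF D G(1)] by blast
      thus False using G(2) by simp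
    qed
    ultimately show ?thesis unfolding gap_def by simp
  qed
  define T where "T = insert 1 ((\<lambda>G. gap G / (\<bar>fnormal P G \<bullet> z\<bar> + 1)) ` NF)"
  define d where "d = Min T"
  have finT: "finite T" unfolding T_def using finNF by simp
  have d0: "d > 0" unfolding d_def
  proof (subst Min_gr_iff)
    show "finite T" by (rule finT)
    show "T \<noteq> {}" unfolding T_def by simp
    show "\<forall>a\<in>T. 0 < a" unfolding T_def using gap_pos
      by (auto intro!: divide_pos_pos simp: add_nonneg_pos)
  qed
  have dle: "d \<le> gap G / (\<bar>fnormal P G \<bullet> z\<bar> + 1)" if "G \<in> NF" for G
    unfolding d_def by (rule Min_le[OF finT]) (use that in \<open>simp add: T_def\<close>)
  define x' where "x' = v + d *\<^sub>R z"
  have x'P: "x' \<in> P"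
  proof (rule delzant_HR[OF D])
    fix G assume G: "G facet_of P"
    let ?uG = "fnormal P G"
    have ex: "?uG \<bullet> x' = ?uG \<bullet> v + d * (?uG \<bullet> z)" unfolding x'_def by (simp add: inner_add_right)
    show "- fphi P G \<le> ?uG \<bullet> x'"
    proof (cases "v \<in> G")
      case True
      have vG: "?uG \<bullet> v = - fphi P G" using fphi_facet(1)[OF D G] True by blast
      have uB: "?uG \<in> B" unfolding Bdef using G True fnormal_facet[OF D G] by blast
      have "?uG \<bullet> z \<ge> 0"
      proof (cases "?uG = w0")
        case True thus ?thesis using z(1) by simp
      next
        case False thus ?thesis using z(2) uB by simp
      qed
      hence "d * (?uG \<bullet> z) \<ge> 0" using d0 by simp
      thus ?thesis using ex vG by simp
    next
      case False
      hence GN: "G \<in> NF" unfolding NF_def using G by simp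
      let ?c = "\<bar>?uG \<bullet> z\<bar>"
      have "d * (?c + 1) \<le> gap G" using dle[OF GN] by (simp add: pos_le_divide_eq add_nonneg_pos)
      hence "d * ?c \<le> gap G" using d0 by (simp add: algebra_simps)
      moreover have "d * (- ?c) \<le> d * (?uG \<bullet> z)" using d0 by (intro mult_left_mono) auto
      ultimately show ?thesis using ex unfolding gap_def by simp
    qed
  qed
  have "?u0 \<bullet> x' = ?u0 \<bullet> v + d * (?u0 \<bullet> z)" unfolding x'_def by (simp add: inner_add_right)
  moreover have "d * (?u0 \<bullet> z) > 0" using d0 u0z by simp
  moreover have "?u0 \<bullet> x' \<le> ?u0 \<bullet> v" using mx[OF x'P] .
  ultimately show False by simp
qed


lemma upsilon_attain:
  fixes P :: "(real^'d) set"
  assumes D: "delzant P" and F0: "F0 facet_of P"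
  shows "width_dir (fnormal P F0) P > 0 \<and> (\<exists>a :: (real^'d) set \<Rightarrow> nat.
       (\<Sum>F\<in>{F. F facet_of P}. real (a F) *\<^sub>R fnormal P F) = 0 \<and>
       width_dir (fnormal P F0) P = (\<Sum>F\<in>{F. F facet_of P}. real (a F) * fphi P F))"
proof -
  let ?u0 = "fnormal P F0"
  let ?FS = "{F. F facet_of P}"
  have finFS: "finite ?FS" using delzant_facets(1)[OF D] .
  obtain v where v: "v extreme_point_of P" and mx: "\<And>y. y \<in> P \<Longrightarrow> ?u0 \<bullet> y \<le> ?u0 \<bullet> v"
    using vertex_max[OF D] by blast
  have vP: "v \<in> P" using v by (simp add: extreme_point_of_def)
  have W: "width_dir ?u0 P = ?u0 \<bullet> v + fphi P F0" by (rule width_eq[OF D F0 vP mx])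
  have u00: "?u0 \<noteq> 0" and iu0: "integral_vec ?u0"
    using fnormal_facet[OF D F0] unfolding facet_normal_def primitive_vec_def by auto
  have lo0: "\<forall>x\<in>P. - fphi P F0 \<le> ?u0 \<bullet> x" using fphi_facet(2)[OF D F0] .
  have Wpos: "width_dir ?u0 P > 0"
  proof (rule ccontr)
    assume "\<not> width_dir ?u0 P > 0"
    hence le: "?u0 \<bullet> v \<le> - fphi P F0" using W by simp
    have "P \<subseteq> {x. ?u0 \<bullet> x = - fphi P F0}"
    proof
      fix x assume x: "x \<in> P"
      have "- fphi P F0 \<le> ?u0 \<bullet> x" "?u0 \<bullet> x \<le> ?u0 \<bullet> v" using lo0 x mx by auto
      thus "x \<in> {x. ?u0 \<bullet> x = - fphi P F0}" using le by simp
    qed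
    thus False using delzant_not_hyp[OF D u00] by blast
  qed
  define B where "B = {w. \<exists>G. G facet_of P \<and> v \<in> G \<and> facet_normal P G w}"
  have L: "lattice_basis B" using D v unfolding delzant_def B_def by blast
  have "integral_vec (- ?u0)" using iu0 unfolding integral_vec_def by simp
  then obtain b :: "real^'d \<Rightarrow> int" where beq: "- ?u0 = (\<Sum>w\<in>B. of_int (b w) *\<^sub>R w)"
    using L unfolding lattice_basis_def by blast
  have bnn: "b w \<ge> 0" if "w \<in> B" for w
    by (rule coeff_nonneg[OF D v F0 mx B_def beq that])
  define FV where "FV = {G \<in> ?FS. v \<in> G}"
  have Bimg: "B = fnormal P ` FV"
  proof
    show "B \<subseteq> fnormal P ` FV"
    proof
      fix w assume "w \<in> B"
      then obtain G where G: "G facet_of P" "v \<in> G" "facet_normal P G w" unfolding B_def by blast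
      have "w = fnormal P G" using facet_normal_unique[OF D G(1) fnormal_facet[OF D G(1)] G(3)] .
      thus "w \<in> fnormal P ` FV" using G unfolding FV_def by blast
    qed
    show "fnormal P ` FV \<subseteq> B"
      unfolding FV_def B_def using fnormal_facet[OF D] by blast
  qed
  have inj: "inj_on (fnormal P) FV"
    unfolding inj_on_def FV_def using fnormal_inj[OF D] by blast
  define a where "a G = (if G = F0 then 1 else 0) + (if v \<in> G then nat (b (fnormal P G)) else 0)" for G
  have ra: "real (a G) = (if G = F0 then 1 else 0) + (if G \<in> FV then real_of_int (b (fnormal P G)) else 0)"
    if G: "G \<in> ?FS" for G
  proof (cases "v \<in> G")
    case True
    hence "G \<in> FV" using G unfolding FV_def by blast
    hence "b (fnormal P G) \<ge> 0" using bnn Bimg by blast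
    thus ?thesis unfolding a_def using True \<open>G \<in> FV\<close> by simp
  next
    case False
    hence "G \<notin> FV" unfolding FV_def by blast
    thus ?thesis unfolding a_def using False by simp
  qed
  have FVsub: "FV \<subseteq> ?FS" unfolding FV_def by blast
  have gen: "(\<Sum>G\<in>?FS. real (a G) *\<^sub>R f G) = f F0 + (\<Sum>G\<in>FV. real_of_int (b (fnormal P G)) *\<^sub>R f G)"
    for f :: "(real^'d) set \<Rightarrow> 'z::real_vector"
  proof -
    have "(\<Sum>G\<in>?FS. real (a G) *\<^sub>R f G) =
          (\<Sum>G\<in>?FS. (if G = F0 then f G else 0) + (if G \<in> FV then real_of_int (b (fnormal P G)) *\<^sub>R f G else 0))"
      by (rule sum.cong) (auto simp: ra scaleR_add_left)
    also have "\<dots> = (\<Sum>G\<in>?FS. (if G = F0 then f G else 0)) + (\<Sum>G\<in>?FS. (if G \<in> FV then real_of_int (b (fnormal P G)) *\<^sub>R f G else 0))"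
      by (rule sum.distrib)
    also have "(\<Sum>G\<in>?FS. (if G = F0 then f G else 0)) = f F0" using finFS F0 by (simp add: sum.delta')
    also have "(\<Sum>G\<in>?FS. (if G \<in> FV then real_of_int (b (fnormal P G)) *\<^sub>R f G else 0)) =
               (\<Sum>G\<in>FV. real_of_int (b (fnormal P G)) *\<^sub>R f G)"
      using finFS FVsub by (simp add: sum.If_cases Int_absorb1)
    finally show ?thesis .
  qed
  have s1: "(\<Sum>G\<in>?FS. real (a G) *\<^sub>R fnormal P G) = 0"
  proof -
    have "(\<Sum>G\<in>FV. real_of_int (b (fnormal P G)) *\<^sub>R fnormal P G) = (\<Sum>w\<in>B. of_int (b w) *\<^sub>R w)"
      unfolding Bimg by (simp add: sum.reindex[OF inj])
    thus ?thesis using gen[of "fnormal P"] beq[symmetric] by simp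
  qed
  have s2: "(\<Sum>G\<in>?FS. real (a G) * fphi P G) = ?u0 \<bullet> v + fphi P F0"
  proof -
    have "(\<Sum>G\<in>?FS. real (a G) * fphi P G) = fphi P F0 + (\<Sum>G\<in>FV. real_of_int (b (fnormal P G)) * fphi P G)"
      using gen[of "fphi P"] by simp
    also have "(\<Sum>G\<in>FV. real_of_int (b (fnormal P G)) * fphi P G) = (\<Sum>G\<in>FV. - (real_of_int (b (fnormal P G)) * (fnormal P G \<bullet> v)))"
    proof (rule sum.cong)
      fix G assume "G \<in> FV"
      hence G: "G facet_of P" "v \<in> G" unfolding FV_def by auto
      have "fnormal P G \<bullet> v = - fphi P G" using fphi_facet(1)[OF D G(1)] G(2) by blast
      thus "real_of_int (b (fnormal P G)) * fphi P G = - (real_of_int (b (fnormal P G)) * (fnormal P G \<bullet> v))" by simp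
    qed simp
    also have "\<dots> = - (\<Sum>w\<in>B. of_int (b w) * (w \<bullet> v))"
      unfolding Bimg by (simp add: sum.reindex[OF inj] sum_negf)
    also have "(\<Sum>w\<in>B. of_int (b w) * (w \<bullet> v)) = (- ?u0) \<bullet> v"
      unfolding beq by (simp add: inner_sum_left)
    finally show ?thesis by simp
  qed
  have "width_dir ?u0 P = (\<Sum>G\<in>?FS. real (a G) * fphi P G)" using s2 W by simp
  thus ?thesis using Wpos s1 by blast
qed


theorem lemma3p8:
  fixes P :: "(real^'d) set"
  assumes "delzant P"
  shows "Upsilon P = facet_width P"
proof -
  note D = assms
  let ?FS = "{F. F facet_of P}"
  let ?W = "\<lambda>F. width_dir (fnormal P F) P"
  have WS: "{width_dir (fnormal P F) P | F. F facet_of P} = ?W ` ?FS" by blast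
  have fin: "finite (?W ` ?FS)" using delzant_facets(1)[OF D] by simp
  have ne: "?W ` ?FS \<noteq> {}" using delzant_facets(2)[OF D] by simp
  have fw: "facet_width P = Min (?W ` ?FS)"
    unfolding facet_width_def WS by (rule cInf_eq_Min[OF fin ne])
  obtain F0 where F0: "F0 facet_of P" "?W F0 = facet_width P"
    using Min_in[OF fin ne] fw by auto
  have fwle: "facet_width P \<le> ?W F" if "F facet_of P" for F
    unfolding fw using fin that by (intro Min_le) auto
  show ?thesis unfolding Upsilon_def
  proof (rule cInf_eq_minimum)
    show "facet_width P \<in> {s. s > 0 \<and> (\<exists>a :: (real^'d) set \<Rightarrow> nat.
       (\<Sum>F\<in>{F. F facet_of P}. real (a F) *\<^sub>R fnormal P F) = 0 \<and>
       s = (\<Sum>F\<in>{F. F facet_of P}. real (a F) * fphi P F))}"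
      using upsilon_attain[OF D F0(1)] F0(2) by simp
  next
    fix s assume "s \<in> {s. s > 0 \<and> (\<exists>a :: (real^'d) set \<Rightarrow> nat.
       (\<Sum>F\<in>{F. F facet_of P}. real (a F) *\<^sub>R fnormal P F) = 0 \<and>
       s = (\<Sum>F\<in>{F. F facet_of P}. real (a F) * fphi P F))}"
    then obtain a :: "(real^'d) set \<Rightarrow> nat" where s0: "s > 0"
      and a1: "(\<Sum>F\<in>{F. F facet_of P}. real (a F) *\<^sub>R fnormal P F) = 0"
      and a2: "s = (\<Sum>F\<in>{F. F facet_of P}. real (a F) * fphi P F)" by blast
    obtain F where "F facet_of P" "?W F \<le> s" using upsilon_lower[OF D a1 a2 s0] by blast
    thus "facet_width P \<le> s" using fwle by (meson order_trans)
  qed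
qed

end
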